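(* Let $T$ be a bipartite trigraph in $\mathcal F$. Then: (1) $T$ is either complete or has an even pair; (2) if $T$ is favorable, then $T$ has an even pair disjoint from its switchable component.
   Context: A trigraph $T$ consists of a finite set $V(T)$ and a map $\theta:\binom{V(T)}{2}\to\{-1,0,1\}$. Two distinct vertices $u,v$ are strongly adjacent if $\theta(uv)=1$, strongly antiadjacent if $\theta(uv)=-1$, and semiadjacent (a switchable pair) if $\theta(uv)=0$; they are adjacent if $\theta(uv)\in\{0,1\}$ and antiadjacent if $\theta(uv)\in\{0,-1\}$. $N(v)$ is the set of vertices adjacent to $v$. For $X\subseteq V(T)$, $T|X$ is the trigraph on $X$ with $\theta$ restricted, and $T\setminus X=T|(V(T)\setminus X)$. A clique is a set of pairwise adjacent vertices; a strongly stable set is a set of pairwise strongly antiadjacent vertices; $T$ is complete if $V(T)$ is a clique. The full realization of $T$ is the graph on $V(T)$ whose edges are the adjacent pairs. A path is a sequence of distinct vertices $p_1,\dots,p_k$ such that $p_i,p_j$ are adjacent when $|i-j|=1$ and antiadjacent when $|i-j|>1$; its length is $k-1$. A hole of length $k\ge5$ consists of vertices $h_1,\dots,h_k$ with $h_i,h_j$ adjacent if $|i-j|\in\{1,k-1\}$ and antiadjacent otherwise; an antihole is an induced subtrigraph whose complement (adjacency function $-\theta$) is a hole. $T$ is Berge if it contains no hole of odd length and no antihole of odd length. An even pair of $T$ is a strongly antiadjacent pair $\{u,v\}$ such that every path from $u$ to $v$ in $T$ has even length. $\Sigma(T)$ is the graph on $V(T)$ whose edges are the switchable pairs of $T$; a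 switchable component is a connected component of $\Sigma(T)$ with at least two vertices. $\mathcal F$ is the class of Berge trigraphs $T$ such that: (1) $T$ has at most one switchable component, and it has at most two edges; (2) if the switchable component has exactly one edge $xy$, then $N(x)\cap N(y)=\emptyset$ (it is called small); (3) if it has two edges, with $v$ the vertex of degree two in $\Sigma(T)$ and $x,y$ its neighbours, then $v$ is strongly anticomplete to $V(T)\setminus\{v,x,y\}$, $x$ is strongly antiadjacent to $y$, and $N(x)\cap N(y)=\{v\}$ (it is called light). For $T\in\mathcal F$, $D$ denotes the vertex set of its switchable component ($D=\emptyset$ if $T$ has no switchable pair). A pair $\{u,v\}$ is disjoint from the switchable component if $\{u,v\}\cap D=\emptyset$. A trigraph $T\in\mathcal F$ is favorable if (1) $|V(T)|\ge5$; (2) $T$ has a strongly antiadjacent pair $\{u,v\}$ disjoint from $D$; and (3) if $D=\{x,y\}$ is small, then at least one of $V(T)\setminus(D\cup N(x))$, $V(T)\setminus(D\cup N(y))$ is not a clique. $T$ is bipartite if $V(T)$ can be partitioned into two strongly stable sets. *)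

theory Defs
  imports Main
begin

text \<open>A trigraph is a finite vertex set V together with a symmetric map
  theta on pairs of distinct vertices with values in {-1,0,1}.
  (Values of theta on pairs that are not two distinct vertices of V are irrelevant.)\<close>

definition trigraph :: "'a set \<Rightarrow> ('a \<Rightarrow> 'a \<Rightarrow> int) \<Rightarrow> bool" where
  "trigraph V \<theta> \<longleftrightarrow> finite V \<and>
     (\<forall>u\<in>V. \<forall>v\<in>V. u \<noteq> v \<longrightarrow> \<theta> u v = \<theta> v u \<and> \<theta> u v \<in> {-1, 0, 1})"

definition adj :: "('a \<Rightarrow> 'a \<Rightarrow> int) \<Rightarrow> 'a \<Rightarrow> 'a \<Rightarrow> bool" where
  "adj \<theta> u v \<longleftrightarrow> \<theta> u v \<in> {0, 1}"

definition antiadj :: "('a \<Rightarrow> 'a \<Rightarrow> int) \<Rightarrow> 'a \<Rightarrow> 'a \<Rightarrow> bool" where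
  "antiadj \<theta> u v \<longleftrightarrow> \<theta> u v \<in> {0, -1}"

definition nbhd :: "'a set \<Rightarrow> ('a \<Rightarrow> 'a \<Rightarrow> int) \<Rightarrow> 'a \<Rightarrow> 'a set" where
  "nbhd V \<theta> v = {u \<in> V. u \<noteq> v \<and> adj \<theta> v u}"

definition clique :: "('a \<Rightarrow> 'a \<Rightarrow> int) \<Rightarrow> 'a set \<Rightarrow> bool" where
  "clique \<theta> X \<longleftrightarrow> (\<forall>u\<in>X. \<forall>v\<in>X. u \<noteq> v \<longrightarrow> adj \<theta> u v)"

definition strongly_stable :: "('a \<Rightarrow> 'a \<Rightarrow> int) \<Rightarrow> 'a set \<Rightarrow> bool" where
  "strongly_stable \<theta> X \<longleftrightarrow> (\<forall>u\<in>X. \<forall>v\<in>X. u \<noteq> v \<longrightarrow> \<theta> u v = -1)"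

definition complete :: "'a set \<Rightarrow> ('a \<Rightarrow> 'a \<Rightarrow> int) \<Rightarrow> bool" where
  "complete V \<theta> \<longleftrightarrow> clique \<theta> V"

text \<open>A path p_1,...,p_k (k >= 1) given as a list; its length is k - 1.\<close>
definition is_path :: "'a set \<Rightarrow> ('a \<Rightarrow> 'a \<Rightarrow> int) \<Rightarrow> 'a list \<Rightarrow> bool" where
  "is_path V \<theta> p \<longleftrightarrow> p \<noteq> [] \<and> distinct p \<and> set p \<subseteq> V \<and>
     (\<forall>i<length p. \<forall>j<length p.
        (Suc i = j \<longrightarrow> adj \<theta> (p ! i) (p ! j)) \<and>
        (Suc i < j \<longrightarrow> antiadj \<theta> (p ! i) (p ! j)))"

definition is_hole :: "'a set \<Rightarrow> ('a \<Rightarrow> 'a \<Rightarrow> int) \<Rightarrow> 'a list \<Rightarrow> bool" where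
  "is_hole V \<theta> h \<longleftrightarrow> length h \<ge> 5 \<and> distinct h \<and> set h \<subseteq> V \<and>
     (\<forall>i<length h. \<forall>j<length h. i \<noteq> j \<longrightarrow>
        ((Suc i = j \<or> Suc j = i \<or> (i = 0 \<and> j = length h - 1) \<or> (j = 0 \<and> i = length h - 1))
           \<longrightarrow> adj \<theta> (h ! i) (h ! j)) \<and>
        (\<not> (Suc i = j \<or> Suc j = i \<or> (i = 0 \<and> j = length h - 1) \<or> (j = 0 \<and> i = length h - 1))
           \<longrightarrow> antiadj \<theta> (h ! i) (h ! j)))"

text \<open>An antihole is a hole of the complement trigraph (adjacency function -theta).\<close>
definition is_antihole :: "'a set \<Rightarrow> ('a \<Rightarrow> 'a \<Rightarrow> int) \<Rightarrow> 'a list \<Rightarrow> bool" where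
  "is_antihole V \<theta> h \<longleftrightarrow> is_hole V (\<lambda>u v. - \<theta> u v) h"

definition berge :: "'a set \<Rightarrow> ('a \<Rightarrow> 'a \<Rightarrow> int) \<Rightarrow> bool" where
  "berge V \<theta> \<longleftrightarrow> \<not> (\<exists>h. (is_hole V \<theta> h \<or> is_antihole V \<theta> h) \<and> odd (length h))"

definition switchable_pairs :: "'a set \<Rightarrow> ('a \<Rightarrow> 'a \<Rightarrow> int) \<Rightarrow> 'a set set" where
  "switchable_pairs V \<theta> = {{u, v} | u v. u \<in> V \<and> v \<in> V \<and> u \<noteq> v \<and> \<theta> u v = 0}"

text \<open>For T in F (at most one switchable component) this is the vertex set D
  of the switchable component (empty if there is no switchable pair).\<close>
definition switch_comp :: "'a set \<Rightarrow> ('a \<Rightarrow> 'a \<Rightarrow> int) \<Rightarrow> 'a set" where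
  "switch_comp V \<theta> = \<Union> (switchable_pairs V \<theta>)"

definition in_F :: "'a set \<Rightarrow> ('a \<Rightarrow> 'a \<Rightarrow> int) \<Rightarrow> bool" where
  "in_F V \<theta> \<longleftrightarrow> trigraph V \<theta> \<and> berge V \<theta> \<and>
    (switchable_pairs V \<theta> = {} \<or>
     (\<exists>x y. switchable_pairs V \<theta> = {{x, y}} \<and> nbhd V \<theta> x \<inter> nbhd V \<theta> y = {}) \<or>
     (\<exists>v x y. x \<noteq> y \<and> switchable_pairs V \<theta> = {{v, x}, {v, y}} \<and>
        (\<forall>w \<in> V - {v, x, y}. \<theta> v w = -1) \<and> \<theta> x y = -1 \<and>
        nbhd V \<theta> x \<inter> nbhd V \<theta> y = {v}))"

definition even_pair :: "'a set \<Rightarrow> ('a \<Rightarrow> 'a \<Rightarrow> int) \<Rightarrow> 'a \<Rightarrow> 'a \<Rightarrow> bool" where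
  "even_pair V \<theta> u v \<longleftrightarrow> u \<in> V \<and> v \<in> V \<and> u \<noteq> v \<and> \<theta> u v = -1 \<and>
     (\<forall>p. is_path V \<theta> p \<and> hd p = u \<and> last p = v \<longrightarrow> even (length p - 1))"

definition favorable :: "'a set \<Rightarrow> ('a \<Rightarrow> 'a \<Rightarrow> int) \<Rightarrow> bool" where
  "favorable V \<theta> \<longleftrightarrow> in_F V \<theta> \<and> card V \<ge> 5 \<and>
     (\<exists>u\<in>V. \<exists>v\<in>V. u \<noteq> v \<and> \<theta> u v = -1 \<and>
        u \<notin> switch_comp V \<theta> \<and> v \<notin> switch_comp V \<theta>) \<and>
     (\<forall>x y. switchable_pairs V \<theta> = {{x, y}} \<longrightarrow>
        \<not> clique \<theta> (V - ({x, y} \<union> nbhd V \<theta> x)) \<or>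
        \<not> clique \<theta> (V - ({x, y} \<union> nbhd V \<theta> y)))"

definition bipartite :: "'a set \<Rightarrow> ('a \<Rightarrow> 'a \<Rightarrow> int) \<Rightarrow> bool" where
  "bipartite V \<theta> \<longleftrightarrow> (\<exists>A B. A \<union> B = V \<and> A \<inter> B = {} \<and>
     strongly_stable \<theta> A \<and> strongly_stable \<theta> B)"

end

theory Submission
  imports Defs
begin

lemma path_parity:
  assumes AB: "A \<union> B = V" "A \<inter> B = {}" and sA: "strongly_stable \<theta> A" and sB: "strongly_stable \<theta> B"
    and p: "is_path V \<theta> p" and h: "hd p \<in> A"
  shows "i < length p \<Longrightarrow> (p ! i \<in> A) = even i"
proof (induction i)
  case 0
  then show ?case using h p by (simp add: hd_conv_nth is_path_def)
next
  case (Suc i)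
  have ne: "p ! i \<noteq> p ! Suc i" using p Suc.prems by (simp add: is_path_def nth_eq_iff_index_eq)
  have ad: "adj \<theta> (p ! i) (p ! Suc i)" using p Suc.prems unfolding is_path_def by auto
  have inV: "p ! i \<in> V" "p ! Suc i \<in> V" using p Suc.prems unfolding is_path_def
    by (meson Suc_lessD nth_mem subsetD)+
  have nA: "\<not> (p ! i \<in> A \<and> p ! Suc i \<in> A)" using sA ne ad unfolding strongly_stable_def adj_def by force
  have nB: "\<not> (p ! i \<in> B \<and> p ! Suc i \<in> B)" using sB ne ad unfolding strongly_stable_def adj_def by force
  have "(p ! Suc i \<in> A) = (p ! i \<notin> A)" using nA nB inV AB by blast
  then show ?case using Suc by simp
qed

lemma even_same:
  assumes AB: "A \<union> B = V" "A \<inter> B = {}" and sA: "strongly_stable \<theta> A" and sB: "strongly_stable \<theta> B"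
    and u: "u \<in> A" and v: "v \<in> A" and uv: "u \<noteq> v"
  shows "even_pair V \<theta> u v"
  unfolding even_pair_def
proof (intro conjI allI impI)
  show "u \<in> V" "v \<in> V" "u \<noteq> v" using AB u v uv by auto
  show "\<theta> u v = -1" using sA u v uv unfolding strongly_stable_def by auto
  fix p assume H: "is_path V \<theta> p \<and> hd p = u \<and> last p = v"
  hence pne: "p \<noteq> []" by (simp add: is_path_def)
  have "(p ! (length p - 1) \<in> A) = even (length p - 1)"
    using path_parity[OF AB sA sB] H u pne by simp
  moreover have "p ! (length p - 1) = v" using H pne by (simp add: last_conv_nth)
  ultimately show "even (length p - 1)" using v by simp
qed

lemma even_isolated:
  assumes u: "u \<in> V" and v: "v \<in> V" and uv: "u \<noteq> v" and th: "\<theta> u v = -1"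
    and iso: "\<forall>z\<in>V. z \<noteq> u \<longrightarrow> \<not> adj \<theta> u z"
  shows "even_pair V \<theta> u v"
  unfolding even_pair_def
proof (intro conjI allI impI)
  show "u \<in> V" "v \<in> V" "u \<noteq> v" "\<theta> u v = -1" using assms by auto
  fix p assume H: "is_path V \<theta> p \<and> hd p = u \<and> last p = v"
  hence pne: "p \<noteq> []" by (simp add: is_path_def)
  have "length p \<noteq> 1"
  proof
    assume "length p = 1"
    then obtain a where "p = [a]" by (cases p) auto
    then show False using H uv by auto
  qed
  hence l: "1 < length p" using pne by (cases p) auto
  have p0: "p ! 0 = u" using H pne by (simp add: hd_conv_nth)
  have "adj \<theta> (p ! 0) (p ! 1)" using H l unfolding is_path_def by auto
  moreover have "p ! 1 \<in> V" using H l unfolding is_path_def by (auto dest!: nth_mem)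
  moreover have "p ! 1 \<noteq> p ! 0" using H l by (simp add: is_path_def nth_eq_iff_index_eq)
  ultimately show "even (length p - 1)" using iso p0 by auto
qed

lemma trig_sym: assumes "trigraph V \<theta>" "a \<in> V" "b \<in> V" "a \<noteq> b" shows "\<theta> a b = \<theta> b a"
    using assms unfolding trigraph_def by blast

lemma sw_mem:
  assumes T: "trigraph V \<theta>" and m: "{a, b} \<in> switchable_pairs V \<theta>"
  shows "a \<noteq> b \<and> a \<in> V \<and> b \<in> V \<and> \<theta> a b = 0"
proof -
  obtain c d where cd: "{a, b} = {c, d}" "c \<in> V" "d \<in> V" "c \<noteq> d" "\<theta> c d = 0"
    using m unfolding switchable_pairs_def by blast
  have "\<theta> d c = 0" using T cd unfolding trigraph_def by metis
  then show ?thesis using cd by (auto simp: doubleton_eq_iff)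
qed

lemma D_sub: "switch_comp V \<theta> \<subseteq> V"
  unfolding switch_comp_def switchable_pairs_def by auto

lemma main2:
  assumes F: "in_F V \<theta>" and AB: "A \<union> B = V" "A \<inter> B = {}"
    and sA: "strongly_stable \<theta> A" and sB: "strongly_stable \<theta> B"
    and c5: "5 \<le> card V" and u: "u \<in> A" and w: "w \<in> B"
    and uD: "u \<notin> switch_comp V \<theta>" and wD: "w \<notin> switch_comp V \<theta>"
    and uw: "\<theta> u w = -1"
    and noA: "\<forall>z1\<in>A - switch_comp V \<theta>. \<forall>z2\<in>A - switch_comp V \<theta>. z1 = z2"
    and noB: "\<forall>z1\<in>B - switch_comp V \<theta>. \<forall>z2\<in>B - switch_comp V \<theta>. z1 = z2"
  shows "\<exists>u v. even_pair V \<theta> u v \<and> u \<notin> switch_comp V \<theta> \<and> v \<notin> switch_comp V \<theta>"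
proof -
  define D where "D = switch_comp V \<theta>"
  have T: "trigraph V \<theta>" using F by (simp add: in_F_def)
  have fin: "finite V" using T by (simp add: trigraph_def)
  have uwne: "u \<noteq> w" using u w AB by auto
  have sub: "V \<subseteq> D \<union> {u, w}"
  proof
    fix z assume z: "z \<in> V"
    show "z \<in> D \<union> {u, w}"
    proof (cases "z \<in> D")
      case False
      have "z \<in> A \<or> z \<in> B" using z AB by auto
      moreover have "z \<in> A \<Longrightarrow> z = u" using noA False u uD unfolding D_def by blast
      moreover have "z \<in> B \<Longrightarrow> z = w" using noB False w wD unfolding D_def by blast
      ultimately show ?thesis by blast
    qed simp
  qed
  have cle: "card V \<le> card D + 2"
  proof -
    have fD: "finite D" unfolding D_def by (rule finite_subset[OF D_sub fin])
    have f2: "finite (D \<union> {u, w})" using fD by simp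
    have "card V \<le> card (D \<union> {u, w})" by (rule card_mono[OF f2 sub])
    also have "\<dots> \<le> card D + card {u, w}" by (rule card_Un_le)
    also have "card {u, w} = 2" using uwne by simp
    finally show ?thesis by simp
  qed
  have symm: "\<And>a b. a \<in> V \<Longrightarrow> b \<in> V \<Longrightarrow> a \<noteq> b \<Longrightarrow> \<theta> a b = \<theta> b a"
    using trig_sym[OF T] by blast
  have uV: "u \<in> V" "w \<in> V" using u w AB by auto
  consider (e) "switchable_pairs V \<theta> = {}"
    | (s) x y where "switchable_pairs V \<theta> = {{x, y}}"
    | (l) v x y where "x \<noteq> y" "switchable_pairs V \<theta> = {{v, x}, {v, y}}"
        "\<forall>z \<in> V - {v, x, y}. \<theta> v z = -1" "\<theta> x y = -1"
    using F unfolding in_F_def by (elim conjE disjE exE) auto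
  then show ?thesis
  proof cases
    case e
    then have "D = {}" unfolding D_def switch_comp_def by simp
    then show ?thesis using cle c5 by simp
  next
    case s
    then have "D = {x, y}" unfolding D_def switch_comp_def by simp
    then have "card D \<le> 2" by (simp add: card_insert_if)
    then show ?thesis using cle c5 by simp
  next
    case l
    have DD: "D = {v, x, y}" using l unfolding D_def switch_comp_def by auto
    have vx: "v \<noteq> x \<and> v \<in> V \<and> x \<in> V \<and> \<theta> v x = 0" using sw_mem[OF T] l by auto
    have vy: "v \<noteq> y \<and> v \<in> V \<and> y \<in> V \<and> \<theta> v y = 0" using sw_mem[OF T] l by auto
    have uvxy: "u \<in> V - {v, x, y}" "w \<in> V - {v, x, y}" using uD wD uV DD unfolding D_def by auto
    have tvu: "\<theta> u v = -1" using l(3) uvxy symm vx uV by (metis DiffD2 insertI1)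
    have tvw: "\<theta> w v = -1" using l(3) uvxy symm vx uV by (metis DiffD2 insertI1)
    have twu: "\<theta> w u = -1" using symm uV uwne uw by metis
    show ?thesis
    proof (cases "v \<in> B")
      case True
      have xA: "x \<in> A" "y \<in> A"
        using True vx vy sB AB unfolding strongly_stable_def by force+
      have iso: "\<forall>z\<in>V. z \<noteq> u \<longrightarrow> \<not> adj \<theta> u z"
      proof (intro ballI impI notI)
        fix z assume z: "z \<in> V" "z \<noteq> u" "adj \<theta> u z"
        have "z \<notin> A" using sA u z unfolding strongly_stable_def adj_def by force
        then have zB: "z \<in> B" using z AB by auto
        have "z \<noteq> w" using z uw unfolding adj_def by auto
        moreover have "z \<noteq> v" using z tvu unfolding adj_def by auto
        moreover have "z \<noteq> x" "z \<noteq> y" using xA `z \<notin> A` by auto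
        ultimately show False using noB zB w wD DD unfolding D_def by blast
      qed
      show ?thesis using even_isolated[OF uV uwne uw iso] uD wD by blast
    next
      case False
      then have vA: "v \<in> A" using vx AB by auto
      have xB: "x \<in> B" "y \<in> B"
        using vA vx vy sA AB unfolding strongly_stable_def by force+
      have iso: "\<forall>z\<in>V. z \<noteq> w \<longrightarrow> \<not> adj \<theta> w z"
      proof (intro ballI impI notI)
        fix z assume z: "z \<in> V" "z \<noteq> w" "adj \<theta> w z"
        have "z \<notin> B" using sB w z unfolding strongly_stable_def adj_def by force
        then have zA: "z \<in> A" using z AB by auto
        have "z \<noteq> u" using z twu unfolding adj_def by auto
        moreover have "z \<noteq> v" using z tvw unfolding adj_def by auto
        moreover have "z \<noteq> x" "z \<noteq> y" using xB `z \<notin> B` by auto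
        ultimately show False using noA zA u uD DD unfolding D_def by blast
      qed
      show ?thesis using even_isolated[OF uV(2) uV(1) uwne[symmetric] twu iso] uD wD by blast
    qed
  qed
qed

theorem theorem4p2:
  fixes V :: "'a set" and \<theta> :: "'a \<Rightarrow> 'a \<Rightarrow> int"
  assumes "in_F V \<theta>" and "bipartite V \<theta>"
  shows "(complete V \<theta> \<or> (\<exists>u v. even_pair V \<theta> u v)) \<and>
         (favorable V \<theta> \<longrightarrow>
            (\<exists>u v. even_pair V \<theta> u v \<and> u \<notin> switch_comp V \<theta> \<and> v \<notin> switch_comp V \<theta>))"
proof -
  obtain A B where AB: "A \<union> B = V" "A \<inter> B = {}" and sA: "strongly_stable \<theta> A"
    and sB: "strongly_stable \<theta> B" using assms(2) unfolding bipartite_def by blast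
  have T: "trigraph V \<theta>" using assms(1) by (simp add: in_F_def)
  have symm: "\<And>a b. a \<in> V \<Longrightarrow> b \<in> V \<Longrightarrow> a \<noteq> b \<Longrightarrow> \<theta> a b = \<theta> b a"
    using trig_sym[OF T] by blast
  have ES: "\<And>a b X. (X = A \<or> X = B) \<Longrightarrow> a \<in> X \<Longrightarrow> b \<in> X \<Longrightarrow> a \<noteq> b \<Longrightarrow> even_pair V \<theta> a b"
  proof -
    fix a b X assume "X = A \<or> X = B" "a \<in> X" "b \<in> X" "a \<noteq> b"
    then show "even_pair V \<theta> a b"
      using even_same[OF AB sA sB, of a b] even_same[of B A V \<theta> a b] AB sA sB
      by (metis Int_commute sup_commute)
  qed
  have P1: "complete V \<theta> \<or> (\<exists>u v. even_pair V \<theta> u v)"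
  proof (cases "complete V \<theta>")
    case True then show ?thesis by simp
  next
    case nc: False
    then obtain u v where uv: "u \<in> V" "v \<in> V" "u \<noteq> v" "\<not> adj \<theta> u v"
      unfolding complete_def clique_def by blast
    have t: "\<theta> u v = -1" using T uv unfolding trigraph_def adj_def by auto
    have "\<exists>u v. even_pair V \<theta> u v"
    proof (cases "\<exists>X a b. (X = A \<or> X = B) \<and> a \<in> X \<and> b \<in> X \<and> a \<noteq> b")
      case True
      then show ?thesis using ES by blast
    next
      case False
      have iso: "\<forall>z\<in>V. z \<noteq> u \<longrightarrow> \<not> adj \<theta> u z"
      proof (intro ballI impI)
        fix z assume z: "z \<in> V" "z \<noteq> u"
        show "\<not> adj \<theta> u z"
        proof (cases "z = v")
          case True then show ?thesis using uv by simp
        next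
          case zv: False
          have "u \<in> A \<or> u \<in> B" "v \<in> A \<or> v \<in> B" "z \<in> A \<or> z \<in> B" using uv z AB by auto
          then show ?thesis using False z zv uv by blast
        qed
      qed
      show ?thesis using even_isolated[OF uv(1,2,3) t iso] by blast
    qed
    then show ?thesis by blast
  qed
  have P2: "favorable V \<theta> \<longrightarrow>
            (\<exists>u v. even_pair V \<theta> u v \<and> u \<notin> switch_comp V \<theta> \<and> v \<notin> switch_comp V \<theta>)"
  proof
    assume fav: "favorable V \<theta>"
    define D where "D = switch_comp V \<theta>"
    obtain u w where uw: "u \<in> V" "w \<in> V" "u \<noteq> w" "\<theta> u w = -1" "u \<notin> D" "w \<notin> D"
      using fav unfolding favorable_def D_def by blast
    have c5: "5 \<le> card V" using fav unfolding favorable_def by simp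
    show "\<exists>u v. even_pair V \<theta> u v \<and> u \<notin> switch_comp V \<theta> \<and> v \<notin> switch_comp V \<theta>"
    proof (cases "\<exists>X a b. (X = A \<or> X = B) \<and> a \<in> X - D \<and> b \<in> X - D \<and> a \<noteq> b")
      case True
      then show ?thesis using ES unfolding D_def by blast
    next
      case False
      then have noA: "\<forall>z1\<in>A - switch_comp V \<theta>. \<forall>z2\<in>A - switch_comp V \<theta>. z1 = z2"
        and noB: "\<forall>z1\<in>B - switch_comp V \<theta>. \<forall>z2\<in>B - switch_comp V \<theta>. z1 = z2"
        unfolding D_def by blast+
      have "(u \<in> A \<and> w \<in> B) \<or> (w \<in> A \<and> u \<in> B)" using False uw AB by blast
      then show ?thesis
      proof
        assume h: "u \<in> A \<and> w \<in> B"
        show ?thesis using main2[OF assms(1) AB sA sB c5, of u w] h uw noA noB unfolding D_def by blast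
      next
        assume h: "w \<in> A \<and> u \<in> B"
        have "\<theta> w u = -1" using symm uw by metis
        then show ?thesis using main2[OF assms(1) AB sA sB c5, of w u] h uw noA noB unfolding D_def by blast
      qed
    qed
  qed
  show ?thesis using P1 P2 by blast
qed

end
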